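(* Let $(M,\mathbf g,\nabla)$ be a Riemann–Cartan spacetime admitting a spin structure, fix a spin frame determining an orthonormal frame $\{\mathbf e_{\mathbf a}\}$ with dual coframe $\{\theta^{\mathbf a}\}$ and reciprocal coframe $\theta_{\mathbf a}=\eta_{\mathbf{ab}}\theta^{\mathbf b}$. For every $\psi\in\sec\mathcal C\ell^{(0)}(M,\mathtt g)$ and all $\mathbf a,\mathbf b$, $$[\nabla^{(s)}_{\mathbf e_{\mathbf a}},\nabla^{(s)}_{\mathbf e_{\mathbf b}}]\psi=\tfrac12\mathfrak R(\theta_{\mathbf a}\wedge\theta_{\mathbf b})\,\psi-\big(T^{\mathbf c}_{\mathbf{ab}}-\omega^{\mathbf c}_{\mathbf{ab}}+\omega^{\mathbf c}_{\mathbf{ba}}\big)\nabla^{(s)}_{\mathbf e_{\mathbf c}}\psi .$$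
   Context: A Riemann–Cartan spacetime: $4$-dimensional oriented, time-oriented manifold $M$ with Lorentzian metric $\mathbf g$ of signature $(1,3)$ and linear connection $\nabla$ with $\nabla\mathbf g=0$ and nonzero torsion. $\mathcal C\ell(M,\mathtt g)$ is the Clifford bundle of differential forms ($\theta^{\mathbf a}\theta^{\mathbf b}+\theta^{\mathbf b}\theta^{\mathbf a}=2\eta^{\mathbf{ab}}$, $\eta=\mathrm{diag}(1,-1,-1,-1)$), $\mathcal C\ell^{(0)}(M,\mathtt g)$ its even subbundle; $\nabla$ extends to $\mathcal C\ell(M,\mathtt g)$ as a derivation of the Clifford product. Notation: $\nabla_{\mathbf e_{\mathbf a}}\mathbf e_{\mathbf b}=\omega^{\mathbf c}_{\mathbf{ab}}\mathbf e_{\mathbf c}$ (equivalently $\nabla_{\mathbf e_{\mathbf a}}\theta^{\mathbf b}=-\omega^{\mathbf b}_{\mathbf{ac}}\theta^{\mathbf c}$), $[\mathbf e_{\mathbf a},\mathbf e_{\mathbf b}]=c^{\mathbf c}_{\mathbf{ab}}\mathbf e_{\mathbf c}$, torsion $T^{\mathbf c}_{\mathbf{ab}}=\omega^{\mathbf c}_{\mathbf{ab}}-\omega^{\mathbf c}_{\mathbf{ba}}-c^{\mathbf c}_{\mathbf{ab}}$. For a vector field $\mathbf v$, $\omega_{\mathbf v}$ is the $2$-form-valued connection form in the gauge $\{\theta^{\mathbf a}\}$: the section of $\bigwedge^2T^*M$ such that $\nabla_{\mathbf v}A=\partial_{\mathbf v}(A)+\frac12[\omega_{\mathbf v},A]$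 for every Clifford field $A=A^I\theta_I$, where $\partial_{\mathbf v}(A)=\mathbf v(A^I)\theta_I$ (derivative of components in the basis of multiforms $\theta_I$ generated by $\{\theta^{\mathbf a}\}$) and $[\cdot,\cdot]$ is the Clifford commutator. The effective spinorial covariant derivative is $\nabla^{(s)}_{\mathbf v}\psi=\nabla_{\mathbf v}\psi+\frac12\psi\,\omega_{\mathbf v}$. The biform-valued curvature is $\mathfrak R(u\wedge v)=\nabla_{\mathbf u}\omega_{\mathbf v}-\nabla_{\mathbf v}\omega_{\mathbf u}-\frac12[\omega_{\mathbf u},\omega_{\mathbf v}]-\omega_{[\mathbf u,\mathbf v]}$, where $u=\mathbf g(\mathbf u,\cdot)$, $v=\mathbf g(\mathbf v,\cdot)$ (so $\theta_{\mathbf a}$ corresponds to $\mathbf e_{\mathbf a}$) and $\nabla_{\mathbf u}\omega_{\mathbf v}$ is the covariant derivative of the Clifford field $\omega_{\mathbf v}$. *)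

theory Defs
  imports "HOL-Analysis.Analysis"
begin

text \<open>Local (frame / chart) model of a Riemann-Cartan spacetime.
  Points of a chart domain U are in real^4; frame indices are elements of the
  type 4 (0 = timelike index).  Clifford algebra Cl(1,3) of multiforms generated
  by the coframe: elements are functions from blades (subsets of frame indices)
  to real coefficients.\<close>

type_synonym idx = 4
type_synonym pt = "real^4"
type_synonym cl = "idx set \<Rightarrow> real"

definition eta :: "idx \<Rightarrow> real" where
  "eta i = (if i = 0 then 1 else -1)"

text \<open>sign of the Clifford product of the blades theta^A and theta^B
  (orthonormal coframe, blades written with increasing indices)\<close>
definition blade_sign :: "idx set \<Rightarrow> idx set \<Rightarrow> real" where
  "blade_sign A B = (-1) ^ card {(i,j). i \<in> A \<and> j \<in> B \<and> j < i}
                    * (\<Prod>i\<in>A \<inter> B. eta i)"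

definition cmul :: "cl \<Rightarrow> cl \<Rightarrow> cl" (infixl "\<star>" 70) where
  "x \<star> y = (\<lambda>C. \<Sum>A\<in>UNIV. \<Sum>B\<in>UNIV.
              if A - B \<union> (B - A) = C then blade_sign A B * x A * y B else 0)"

definition cone :: cl where "cone = (\<lambda>A. if A = {} then 1 else 0)"

definition cadd :: "cl \<Rightarrow> cl \<Rightarrow> cl" where "cadd x y = (\<lambda>A. x A + y A)"
definition csub :: "cl \<Rightarrow> cl \<Rightarrow> cl" where "csub x y = (\<lambda>A. x A - y A)"
definition cscale :: "real \<Rightarrow> cl \<Rightarrow> cl" where "cscale r x = (\<lambda>A. r * x A)"
definition csum :: "('i \<Rightarrow> cl) \<Rightarrow> 'i set \<Rightarrow> cl" where
  "csum f S = (\<lambda>A. \<Sum>i\<in>S. f i A)"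

definition ccomm :: "cl \<Rightarrow> cl \<Rightarrow> cl" where
  "ccomm x y = csub (x \<star> y) (y \<star> x)"

text \<open>coframe 1-form theta^i and reciprocal theta_i = eta_ii theta^i\<close>
definition gen :: "idx \<Rightarrow> cl" where
  "gen i = (\<lambda>A. if A = {i} then 1 else 0)"

definition prodlist :: "cl list \<Rightarrow> cl" where
  "prodlist xs = foldr cmul xs cone"

definition is_even :: "cl \<Rightarrow> bool" where
  "is_even x \<longleftrightarrow> (\<forall>A. odd (card A) \<longrightarrow> x A = 0)"

definition is_bivector :: "cl \<Rightarrow> bool" where
  "is_bivector x \<longleftrightarrow> (\<forall>A. card A \<noteq> 2 \<longrightarrow> x A = 0)"

text \<open>The connection acting algebraically on the Clifford algebra at a point, as the
  derivation of the Clifford product determined by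
  nabla_v theta^b = - w b c theta^c  (w b c = omega^b_{vc}).\<close>
definition Dgen :: "(idx \<Rightarrow> idx \<Rightarrow> real) \<Rightarrow> idx \<Rightarrow> cl" where
  "Dgen w b = csum (\<lambda>c. cscale (- w b c) (gen c)) UNIV"

definition Dblade :: "(idx \<Rightarrow> idx \<Rightarrow> real) \<Rightarrow> idx set \<Rightarrow> cl" where
  "Dblade w A = (let L = sorted_list_of_set A in
     csum (\<lambda>j. prodlist ((map gen L)[j := Dgen w (L ! j)])) {..<length L})"

definition Dalg :: "(idx \<Rightarrow> idx \<Rightarrow> real) \<Rightarrow> cl \<Rightarrow> cl" where
  "Dalg w x = csum (\<lambda>A. cscale (x A) (Dblade w A)) UNIV"

text \<open>Vector fields are given by their frame components v a (v = v^a e_a).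
  e a : the frame vector field e_a in chart coordinates.
  om b a c : the connection coefficient omega^b_{ac}, i.e. nabla_{e_a} e_c = omega^b_{ac} e_b.\<close>

definition vder :: "(idx \<Rightarrow> pt \<Rightarrow> pt) \<Rightarrow> (idx \<Rightarrow> pt \<Rightarrow> real) \<Rightarrow> (pt \<Rightarrow> real) \<Rightarrow> pt \<Rightarrow> real" where
  "vder e v f x = (\<Sum>a\<in>UNIV. v a x * frechet_derivative f (at x) (e a x))"

definition cpartial :: "(idx \<Rightarrow> pt \<Rightarrow> pt) \<Rightarrow> (idx \<Rightarrow> pt \<Rightarrow> real) \<Rightarrow> (pt \<Rightarrow> cl) \<Rightarrow> pt \<Rightarrow> cl" where
  "cpartial e v A x = (\<lambda>I. vder e v (\<lambda>y. A y I) x)"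

definition conn_v :: "(idx \<Rightarrow> idx \<Rightarrow> idx \<Rightarrow> pt \<Rightarrow> real) \<Rightarrow> (idx \<Rightarrow> pt \<Rightarrow> real) \<Rightarrow> pt \<Rightarrow> idx \<Rightarrow> idx \<Rightarrow> real" where
  "conn_v om v x b c = (\<Sum>a\<in>UNIV. v a x * om b a c x)"

definition cnabla :: "(idx \<Rightarrow> pt \<Rightarrow> pt) \<Rightarrow> (idx \<Rightarrow> idx \<Rightarrow> idx \<Rightarrow> pt \<Rightarrow> real) \<Rightarrow> (idx \<Rightarrow> pt \<Rightarrow> real) \<Rightarrow> (pt \<Rightarrow> cl) \<Rightarrow> pt \<Rightarrow> cl" where
  "cnabla e om v A x = cadd (cpartial e v A x) (Dalg (conn_v om v x) (A x))"

definition omega_v :: "(idx \<Rightarrow> idx \<Rightarrow> idx \<Rightarrow> pt \<Rightarrow> real) \<Rightarrow> (idx \<Rightarrow> pt \<Rightarrow> real) \<Rightarrow> pt \<Rightarrow> cl" where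
  "omega_v om v x = (THE B. is_bivector B \<and>
      (\<forall>y. Dalg (conn_v om v x) y = cscale (1/2) (ccomm B y)))"

definition snabla :: "(idx \<Rightarrow> pt \<Rightarrow> pt) \<Rightarrow> (idx \<Rightarrow> idx \<Rightarrow> idx \<Rightarrow> pt \<Rightarrow> real) \<Rightarrow> (idx \<Rightarrow> pt \<Rightarrow> real) \<Rightarrow> (pt \<Rightarrow> cl) \<Rightarrow> pt \<Rightarrow> cl" where
  "snabla e om v psi x = cadd (cnabla e om v psi x) (cscale (1/2) (psi x \<star> omega_v om v x))"

text \<open>frame vector field e_a in frame components\<close>
definition fv :: "idx \<Rightarrow> idx \<Rightarrow> pt \<Rightarrow> real" where
  "fv a = (\<lambda>c x. if c = a then 1 else 0)"

text \<open>biform-valued curvature R(theta_a wedge theta_b); cc c a b = c^c_{ab}\<close>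
definition curv :: "(idx \<Rightarrow> pt \<Rightarrow> pt) \<Rightarrow> (idx \<Rightarrow> idx \<Rightarrow> idx \<Rightarrow> pt \<Rightarrow> real) \<Rightarrow> (idx \<Rightarrow> idx \<Rightarrow> idx \<Rightarrow> pt \<Rightarrow> real) \<Rightarrow> idx \<Rightarrow> idx \<Rightarrow> pt \<Rightarrow> cl" where
  "curv e om cc a b x =
     csub (csub (csub (cnabla e om (fv a) (omega_v om (fv b)) x)
                      (cnabla e om (fv b) (omega_v om (fv a)) x))
                (cscale (1/2) (ccomm (omega_v om (fv a) x) (omega_v om (fv b) x))))
          (omega_v om (\<lambda>c y. cc c a b y) x)"

definition torsion :: "(idx \<Rightarrow> idx \<Rightarrow> idx \<Rightarrow> pt \<Rightarrow> real) \<Rightarrow> (idx \<Rightarrow> idx \<Rightarrow> idx \<Rightarrow> pt \<Rightarrow> real) \<Rightarrow> idx \<Rightarrow> idx \<Rightarrow> idx \<Rightarrow> pt \<Rightarrow> real" where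
  "torsion om cc c a b x = om c a b x - om c b a x - cc c a b x"

fun Ck :: "nat \<Rightarrow> pt set \<Rightarrow> (pt \<Rightarrow> real) \<Rightarrow> bool" where
  "Ck 0 U f = continuous_on U f"
| "Ck (Suc k) U f = ((\<forall>x\<in>U. f differentiable (at x)) \<and>
                     (\<forall>i. Ck k U (\<lambda>x. frechet_derivative f (at x) (axis i 1))))"

definition smooth_on :: "pt set \<Rightarrow> (pt \<Rightarrow> real) \<Rightarrow> bool" where
  "smooth_on U f \<longleftrightarrow> (\<forall>k. Ck k U f)"

end

theory Submission
  imports Defs
begin

definition sd :: "idx set \<Rightarrow> idx set \<Rightarrow> idx set" where
  "sd A B = A - B \<union> (B - A)"

lemma sd_inv[simp]: "sd A (sd A B) = B" by (auto simp: sd_def)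
lemma sd_comm: "sd A B = sd B A" by (auto simp: sd_def)
lemma sd_assoc: "sd (sd A B) C = sd A (sd B C)" by (auto simp: sd_def)
lemma sd_eq_iff: "sd A B = D \<longleftrightarrow> B = sd A D" by (auto simp: sd_def)
lemma sd_empty[simp]: "sd {} A = A" "sd A {} = A" "sd A A = {}" by (auto simp: sd_def)

definition GG :: "idx set \<Rightarrow> idx set \<Rightarrow> idx \<Rightarrow> idx \<Rightarrow> real" where
  "GG A B i j = (if i \<in> A \<and> j \<in> B \<and> j < i then -1 else 1) *
                (if i = j \<and> i \<in> A \<and> i \<in> B then eta i else 1)"

lemma prod_if_card:
  fixes X :: "'a set"
  assumes "finite X"
  shows "(\<Prod>p\<in>X. if P p then c else 1) = (c::real) ^ card {p\<in>X. P p}"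
proof -
  have "(\<Prod>p\<in>X. if P p then c else 1) = (\<Prod>p\<in>{p\<in>X. P p}. c)"
    using prod.inter_filter[OF assms, of "\<lambda>_. c" P] by simp
  then show ?thesis using assms by (simp add: prod_constant)
qed

lemma bs_prod: "blade_sign A B = (\<Prod>i\<in>UNIV. \<Prod>j\<in>UNIV. GG A B i j)"
proof -
  have 1: "(-1::real) ^ card {(i,j). i \<in> A \<and> j \<in> B \<and> j < i}
     = (\<Prod>i\<in>UNIV. \<Prod>j\<in>UNIV. if i \<in> A \<and> j \<in> B \<and> j < i then -1 else 1)"
  proof -
    have "(\<Prod>i\<in>UNIV. \<Prod>j\<in>UNIV. if i \<in> A \<and> j \<in> B \<and> j < i then -1 else (1::real))
       = (\<Prod>p\<in>UNIV \<times> UNIV. if fst p \<in> A \<and> snd p \<in> B \<and> snd p < fst p then -1 else 1)"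
      by (simp add: prod.cartesian_product case_prod_beta)
    also have "\<dots> = (-1) ^ card {p \<in> UNIV \<times> UNIV. fst p \<in> A \<and> snd p \<in> B \<and> snd p < fst p}"
      by (rule prod_if_card) simp
    also have "{p \<in> UNIV \<times> UNIV. fst p \<in> A \<and> snd p \<in> B \<and> snd p < fst p}
       = {(i,j). i \<in> A \<and> j \<in> B \<and> j < i}" by auto
    finally show ?thesis by simp
  qed
  have 2: "(\<Prod>i\<in>A \<inter> B. eta i) = (\<Prod>i\<in>UNIV. \<Prod>j\<in>UNIV. if i = j \<and> i \<in> A \<and> i \<in> B then eta i else 1)"
  proof -
    have "\<And>i. (\<Prod>j\<in>UNIV. if i = j \<and> i \<in> A \<and> i \<in> B then eta i else 1)
         = (if i \<in> A \<inter> B then eta i else 1)"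
    proof -
      fix i
      have "(\<Prod>j\<in>UNIV. if i = j \<and> i \<in> A \<and> i \<in> B then eta i else 1)
          = (\<Prod>j\<in>UNIV. if j = i then (if i \<in> A \<inter> B then eta i else 1) else 1)"
        by (rule prod.cong) auto
      also have "\<dots> = (if i \<in> A \<inter> B then eta i else 1)" by (simp add: prod.delta)
      finally show "?thesis i" .
    qed
    then have "(\<Prod>i\<in>UNIV. \<Prod>j\<in>UNIV. if i = j \<and> i \<in> A \<and> i \<in> B then eta i else 1)
       = (\<Prod>i\<in>UNIV. if i \<in> A \<inter> B then eta i else 1)" by simp
    also have "\<dots> = (\<Prod>i\<in>UNIV \<inter> (A \<inter> B). eta i)"
      by (rule prod.inter_restrict[symmetric]) simp
    finally show ?thesis by simp
  qed
  show ?thesis unfolding blade_sign_def 1 2 GG_def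
    by (simp add: prod.distrib)
qed

lemma GG_cocycle:
  "GG A B i j * GG (sd A B) C i j = GG A (sd B C) i j * GG B C i j"
  unfolding GG_def sd_def
  by (cases "i \<in> A"; cases "i \<in> B"; cases "i \<in> C"; cases "j \<in> A"; cases "j \<in> B"; cases "j \<in> C"; cases "j < i"; cases "i = j"; simp)

lemma bs_cocycle:
  "blade_sign A B * blade_sign (sd A B) C = blade_sign A (sd B C) * blade_sign B C"
  unfolding bs_prod prod.distrib[symmetric] GG_cocycle ..

lemma cmul_alt: "(x \<star> y) D = (\<Sum>A\<in>UNIV. blade_sign A (sd A D) * x A * y (sd A D))"
proof -
  have "\<And>A. (\<Sum>B\<in>UNIV. if A - B \<union> (B - A) = D then blade_sign A B * x A * y B else 0)
     = blade_sign A (sd A D) * x A * y (sd A D)"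
  proof -
    fix A
    have "(\<Sum>B\<in>UNIV. if A - B \<union> (B - A) = D then blade_sign A B * x A * y B else 0)
       = (\<Sum>B\<in>UNIV. if B = sd A D then blade_sign A B * x A * y B else 0)"
      by (rule sum.cong) (auto simp: sd_eq_iff[symmetric] sd_def)
    then show "?thesis A" by (simp add: sum.delta')
  qed
  then show ?thesis unfolding cmul_def by simp
qed

lemma cmul_assoc: "(x \<star> y) \<star> z = x \<star> (y \<star> z)"
proof (rule ext)
  fix D
  have L: "((x \<star> y) \<star> z) D = (\<Sum>A\<in>UNIV. \<Sum>B\<in>UNIV.
      blade_sign (sd A B) (sd (sd A B) D) * blade_sign A B * x A * y B * z (sd (sd A B) D))"
  proof -
    have "((x \<star> y) \<star> z) D = (\<Sum>E\<in>UNIV. \<Sum>A\<in>UNIV. blade_sign E (sd E D) *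
        (blade_sign A (sd A E) * x A * y (sd A E)) * z (sd E D))"
      unfolding cmul_alt by (simp add: sum_distrib_left sum_distrib_right)
    also have "\<dots> = (\<Sum>A\<in>UNIV. \<Sum>E\<in>UNIV. blade_sign E (sd E D) *
        (blade_sign A (sd A E) * x A * y (sd A E)) * z (sd E D))"
      by (rule sum.swap)
    also have "\<dots> = (\<Sum>A\<in>UNIV. \<Sum>B\<in>UNIV. blade_sign (sd A B) (sd (sd A B) D) *
        (blade_sign A B * x A * y B) * z (sd (sd A B) D))"
    proof (rule sum.cong[OF refl])
      fix A
      show "(\<Sum>E\<in>UNIV. blade_sign E (sd E D) *
        (blade_sign A (sd A E) * x A * y (sd A E)) * z (sd E D)) =
        (\<Sum>B\<in>UNIV. blade_sign (sd A B) (sd (sd A B) D) *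
        (blade_sign A B * x A * y B) * z (sd (sd A B) D))"
        by (rule sum.reindex_bij_witness[of _ "sd A" "sd A"]) auto
    qed
    finally show ?thesis by (simp add: ac_simps)
  qed
  have R: "(x \<star> (y \<star> z)) D = (\<Sum>A\<in>UNIV. \<Sum>B\<in>UNIV.
      blade_sign A (sd A D) * blade_sign B (sd B (sd A D)) * x A * y B * z (sd B (sd A D)))"
    unfolding cmul_alt by (simp add: sum_distrib_left sum_distrib_right ac_simps)
  show "((x \<star> y) \<star> z) D = (x \<star> (y \<star> z)) D"
    unfolding L R
  proof (intro sum.cong refl)
    fix A B
    have e1: "sd (sd A B) D = sd B (sd A D)" by (auto simp: sd_def)
    have e2: "sd B (sd B (sd A D)) = sd A D" by simp
    have "blade_sign A B * blade_sign (sd A B) (sd B (sd A D))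
        = blade_sign A (sd B (sd B (sd A D))) * blade_sign B (sd B (sd A D))"
      by (rule bs_cocycle)
    then have "blade_sign (sd A B) (sd B (sd A D)) * blade_sign A B
        = blade_sign A (sd A D) * blade_sign B (sd B (sd A D))"
      by (simp add: mult.commute)
    then show "blade_sign (sd A B) (sd (sd A B) D) * blade_sign A B * x A * y B * z (sd (sd A B) D) =
         blade_sign A (sd A D) * blade_sign B (sd B (sd A D)) * x A * y B * z (sd B (sd A D))"
      unfolding e1 by simp
  qed
qed

lemma bs_empty[simp]: "blade_sign {} D = 1" "blade_sign D {} = 1"
  by (simp_all add: blade_sign_def)

lemma cmul_cone_left[simp]: "cone \<star> x = x"
proof
  fix D
  have "(cone \<star> x) D = (\<Sum>A\<in>UNIV. if A = {} then blade_sign A (sd A D) * x (sd A D) else 0)"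
    unfolding cmul_alt cone_def by (rule sum.cong) auto
  then show "(cone \<star> x) D = x D" by (simp add: sum.delta')
qed

lemma cmul_cone_right[simp]: "x \<star> cone = x"
proof
  fix D
  have "(x \<star> cone) D = (\<Sum>A\<in>UNIV. if A = D then blade_sign A (sd A D) * x A else 0)"
    unfolding cmul_alt cone_def by (rule sum.cong) (auto simp: sd_def)
  then show "(x \<star> cone) D = x D" by (simp add: sum.delta')
qed

lemma cmul_add_left: "cadd x y \<star> z = cadd (x \<star> z) (y \<star> z)"
  unfolding cadd_def by (rule ext) (simp add: cmul_alt algebra_simps sum.distrib)
lemma cmul_add_right: "z \<star> cadd x y = cadd (z \<star> x) (z \<star> y)"
  unfolding cadd_def by (rule ext) (simp add: cmul_alt algebra_simps sum.distrib)
lemma cmul_scale_left: "cscale r x \<star> z = cscale r (x \<star> z)"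
  unfolding cscale_def by (rule ext) (simp add: cmul_alt algebra_simps sum_distrib_left)
lemma cmul_scale_right: "z \<star> cscale r x = cscale r (z \<star> x)"
  unfolding cscale_def by (rule ext) (simp add: cmul_alt algebra_simps sum_distrib_left)
lemma cmul_neg_left: "(\<lambda>A. - x A) \<star> z = (\<lambda>A. - (x \<star> z) A)"
  by (rule ext) (simp add: cmul_alt sum_negf)
lemma cmul_neg_right: "z \<star> (\<lambda>A. - x A) = (\<lambda>A. - (z \<star> x) A)"
  by (rule ext) (simp add: cmul_alt sum_negf)
lemma cmul_zero_left: "(\<lambda>A. 0) \<star> z = (\<lambda>A. 0)"
  by (rule ext) (simp add: cmul_alt)
lemma cmul_zero_right: "z \<star> (\<lambda>A. 0) = (\<lambda>A. 0)"
  by (rule ext) (simp add: cmul_alt)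

typedef clt = "UNIV :: cl set" morphisms rep abs_cl by auto

lemma rep_abs[simp]: "rep (abs_cl x) = x" by (simp add: abs_cl_inverse)

instantiation clt :: real_algebra_1
begin
definition "0 = abs_cl (\<lambda>_. 0)"
definition "1 = abs_cl cone"
definition "a + b = abs_cl (cadd (rep a) (rep b))"
definition "a - b = abs_cl (csub (rep a) (rep b))"
definition "- a = abs_cl (\<lambda>A. - rep a A)"
definition "a * b = abs_cl (rep a \<star> rep b)"
definition "scaleR r a = abs_cl (cscale r (rep a))"
instance
proof
  fix a b c :: clt and r s :: real
  have eq: "\<And>x y. x = y \<longleftrightarrow> rep x = rep y" by (simp add: rep_inject)
  show "a + b + c = a + (b + c)" unfolding eq by (auto simp: plus_clt_def cadd_def)
  show "a + b = b + a" unfolding eq by (auto simp: plus_clt_def cadd_def)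
  show "0 + a = a" unfolding eq by (auto simp: plus_clt_def zero_clt_def cadd_def)
  show "- a + a = 0" unfolding eq by (auto simp: plus_clt_def zero_clt_def uminus_clt_def cadd_def)
  show "a - b = a + - b" unfolding eq by (auto simp: plus_clt_def minus_clt_def uminus_clt_def cadd_def csub_def)
  show "r *\<^sub>R (a + b) = r *\<^sub>R a + r *\<^sub>R b" unfolding eq
    by (auto simp: plus_clt_def scaleR_clt_def cadd_def cscale_def algebra_simps)
  show "(r + s) *\<^sub>R a = r *\<^sub>R a + s *\<^sub>R a" unfolding eq
    by (auto simp: plus_clt_def scaleR_clt_def cadd_def cscale_def algebra_simps)
  show "r *\<^sub>R s *\<^sub>R a = (r * s) *\<^sub>R a" unfolding eq
    by (auto simp: scaleR_clt_def cscale_def algebra_simps)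
  show "1 *\<^sub>R a = a" unfolding eq by (auto simp: scaleR_clt_def cscale_def)
  show "a * b * c = a * (b * c)" unfolding eq by (simp add: times_clt_def cmul_assoc)
  show "1 * a = a" unfolding eq by (simp add: times_clt_def one_clt_def)
  show "a * 1 = a" unfolding eq by (simp add: times_clt_def one_clt_def)
  show "(a + b) * c = a * c + b * c" unfolding eq by (simp add: times_clt_def plus_clt_def cmul_add_left)
  show "a * (b + c) = a * b + a * c" unfolding eq by (simp add: times_clt_def plus_clt_def cmul_add_right)
  show "(0::clt) \<noteq> 1" unfolding eq by (simp add: zero_clt_def one_clt_def cone_def fun_eq_iff)
  show "r *\<^sub>R a * b = r *\<^sub>R (a * b)" unfolding eq by (simp add: times_clt_def scaleR_clt_def cmul_scale_left)
  show "a * r *\<^sub>R b = r *\<^sub>R (a * b)" unfolding eq by (simp add: times_clt_def scaleR_clt_def cmul_scale_right)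
qed
end

lemma abs_eq_iff: "x = y \<longleftrightarrow> abs_cl x = abs_cl y" by (simp add: abs_cl_inject)

lemma abs_hom:
  "abs_cl (cadd x y) = abs_cl x + abs_cl y"
  "abs_cl (csub x y) = abs_cl x - abs_cl y"
  "abs_cl (x \<star> y) = abs_cl x * abs_cl y"
  "abs_cl (cscale r x) = r *\<^sub>R abs_cl x"
  "abs_cl cone = 1"
  "abs_cl (ccomm x y) = abs_cl x * abs_cl y - abs_cl y * abs_cl x"
  by (simp_all add: plus_clt_def minus_clt_def times_clt_def scaleR_clt_def one_clt_def ccomm_def)

lemma abs_csum: "finite S \<Longrightarrow> abs_cl (csum f S) = (\<Sum>i\<in>S. abs_cl (f i))"
proof (induction S rule: finite_induct)
  case empty
  then show ?case by (simp add: csum_def zero_clt_def)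
next
  case (insert x F)
  have "csum f (insert x F) = cadd (f x) (csum f F)"
    using insert by (simp add: csum_def cadd_def fun_eq_iff)
  then show ?case using insert by (simp add: abs_hom)
qed

lemma sd_single_eq: "sd {a} X = {b} \<longleftrightarrow> X = sd {a} {b}" by (auto simp: sd_def)

lemma gen_mul: "gen a \<star> gen b = (\<lambda>D. if D = sd {a} {b} then blade_sign {a} {b} else 0)"
proof
  fix D
  have "(gen a \<star> gen b) D = (\<Sum>A\<in>UNIV. if A = {a} then blade_sign A (sd A D) * gen b (sd A D) else 0)"
    unfolding cmul_alt by (rule sum.cong) (auto simp: gen_def)
  also have "\<dots> = blade_sign {a} (sd {a} D) * gen b (sd {a} D)" by (simp add: sum.delta')
  also have "\<dots> = (if D = sd {a} {b} then blade_sign {a} {b} else 0)"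
    by (auto simp: gen_def sd_single_eq)
  finally show "(gen a \<star> gen b) D = (if D = sd {a} {b} then blade_sign {a} {b} else 0)" .
qed

lemma bs_single: "blade_sign {a} {b} = (if b < a then -1 else 1) * (if a = b then eta a else 1)"
proof -
  have "{(i, j). i \<in> {a} \<and> j \<in> {b} \<and> j < i} = (if b < a then {(a,b)} else {})" by auto
  then show ?thesis unfolding blade_sign_def by auto
qed

lemma eta_sq: "eta i * eta i = 1" by (simp add: eta_def)
lemma eta_nz: "eta i \<noteq> 0" by (simp add: eta_def)

definition g :: "idx \<Rightarrow> clt" where "g r = abs_cl (gen r)"

lemma gen_anticomm: "g a * g b + g b * g a = (if a = b then 2 * eta a else 0) *\<^sub>R 1"
proof -
  have "cadd (gen a \<star> gen b) (gen b \<star> gen a) = cscale (if a = b then 2 * eta a else 0) cone"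
  proof (cases "a = b")
    case True
    then show ?thesis by (auto simp: gen_mul bs_single cadd_def cscale_def cone_def fun_eq_iff sd_def)
  next
    case False
    have s: "sd {b} {a} = sd {a} {b}" by (rule sd_comm)
    have "(if b < a then -1 else 1) + (if a < b then -1 else 1) = (0::real)"
      using False by (cases "a < b") (auto simp: not_less_iff_gr_or_eq)
    then show ?thesis using False by (auto simp: gen_mul bs_single cadd_def cscale_def cone_def fun_eq_iff s)
  qed
  then have "abs_cl (cadd (gen a \<star> gen b) (gen b \<star> gen a)) = abs_cl (cscale (if a = b then 2 * eta a else 0) cone)"
    by simp
  then show ?thesis by (simp add: abs_hom g_def)
qed

definition cc2 :: "idx \<Rightarrow> idx \<Rightarrow> real" where "cc2 a b = (if a = b then 2 * eta a else 0)"

lemma gen_comm3: "g p * g q * g r - g r * (g p * g q) = cc2 q r *\<^sub>R g p - cc2 p r *\<^sub>R g q"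
proof -
  have qr: "g q * g r = cc2 q r *\<^sub>R 1 - g r * g q" using gen_anticomm[of q r] unfolding cc2_def
    by (simp add: algebra_simps eq_diff_eq)
  have pr: "g p * g r = cc2 p r *\<^sub>R 1 - g r * g p" using gen_anticomm[of p r] unfolding cc2_def
    by (simp add: algebra_simps eq_diff_eq)
  have "g p * g q * g r = g p * (g q * g r)" by (simp add: mult.assoc)
  also have "\<dots> = cc2 q r *\<^sub>R g p - (g p * g r) * g q" unfolding qr by (simp add: algebra_simps)
  also have "\<dots> = cc2 q r *\<^sub>R g p - cc2 p r *\<^sub>R g q + g r * (g p * g q)" unfolding pr by (simp add: algebra_simps)
  finally show ?thesis by simp
qed

definition Bexp :: "(idx \<Rightarrow> idx \<Rightarrow> real) \<Rightarrow> cl" where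
  "Bexp w = csum (\<lambda>p. csum (\<lambda>q. cscale (eta p * w p q / 2) (gen p \<star> gen q)) UNIV) UNIV"

lemma abs_Bexp: "abs_cl (Bexp w) = (\<Sum>p\<in>UNIV. \<Sum>q\<in>UNIV. (eta p * w p q / 2) *\<^sub>R (g p * g q))"
  by (simp add: Bexp_def abs_csum abs_hom g_def)

definition compat :: "(idx \<Rightarrow> idx \<Rightarrow> real) \<Rightarrow> bool" where
  "compat w \<longleftrightarrow> (\<forall>b c. eta b * w b c = - (eta c * w c b))"

lemma abs_Dgen: "abs_cl (Dgen w r) = (\<Sum>c\<in>UNIV. (- w r c) *\<^sub>R g c)"
  by (simp add: Dgen_def abs_csum abs_hom g_def)

lemma Bexp_comm_gen:
  assumes "compat w"
  shows "(1/2) *\<^sub>R (abs_cl (Bexp w) * g r - g r * abs_cl (Bexp w)) = abs_cl (Dgen w r)"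
proof -
  let ?k = "\<lambda>p q. eta p * w p q / 2"
  have "abs_cl (Bexp w) * g r - g r * abs_cl (Bexp w)
      = (\<Sum>p\<in>UNIV. \<Sum>q\<in>UNIV. ?k p q *\<^sub>R (g p * g q * g r - g r * (g p * g q)))"
    unfolding abs_Bexp
    by (simp add: sum_distrib_left sum_distrib_right sum_subtractf[symmetric] scaleR_diff_right)
  also have "\<dots> = (\<Sum>p\<in>UNIV. \<Sum>q\<in>UNIV. ?k p q *\<^sub>R (cc2 q r *\<^sub>R g p))
                  - (\<Sum>p\<in>UNIV. \<Sum>q\<in>UNIV. ?k p q *\<^sub>R (cc2 p r *\<^sub>R g q))"
    unfolding gen_comm3 by (simp add: sum_subtractf[symmetric] scaleR_diff_right)
  also have "(\<Sum>p\<in>UNIV. \<Sum>q\<in>UNIV. ?k p q *\<^sub>R (cc2 q r *\<^sub>R g p))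
      = (\<Sum>p\<in>UNIV. (?k p r * (2 * eta r)) *\<^sub>R g p)"
  proof (rule sum.cong[OF refl])
    fix p
    have "(\<Sum>q\<in>UNIV. ?k p q *\<^sub>R (cc2 q r *\<^sub>R g p)) = (\<Sum>q\<in>UNIV. if q = r then (?k p r * (2 * eta r)) *\<^sub>R g p else 0)"
      by (rule sum.cong) (auto simp: cc2_def)
    then show "(\<Sum>q\<in>UNIV. ?k p q *\<^sub>R (cc2 q r *\<^sub>R g p)) = (?k p r * (2 * eta r)) *\<^sub>R g p"
      by (simp add: sum.delta)
  qed
  also have "(\<Sum>p\<in>UNIV. \<Sum>q\<in>UNIV. ?k p q *\<^sub>R (cc2 p r *\<^sub>R g q))
      = (\<Sum>q\<in>UNIV. (?k r q * (2 * eta r)) *\<^sub>R g q)"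
  proof -
    have "(\<Sum>p\<in>UNIV. \<Sum>q\<in>UNIV. ?k p q *\<^sub>R (cc2 p r *\<^sub>R g q))
        = (\<Sum>p\<in>UNIV. if p = r then (\<Sum>q\<in>UNIV. (?k r q * (2 * eta r)) *\<^sub>R g q) else 0)"
      by (rule sum.cong) (auto simp: cc2_def)
    then show ?thesis by (simp add: sum.delta)
  qed
  finally have 1: "abs_cl (Bexp w) * g r - g r * abs_cl (Bexp w)
     = (\<Sum>p\<in>UNIV. (?k p r * (2 * eta r)) *\<^sub>R g p) - (\<Sum>q\<in>UNIV. (?k r q * (2 * eta r)) *\<^sub>R g q)" .
  have "\<And>c. ?k c r * (2 * eta r) - ?k r c * (2 * eta r) = - 2 * w r c"
  proof -
    fix c
    have "eta c * w c r = - (eta r * w r c)" using assms unfolding compat_def by blast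
    then have "?k c r * (2 * eta r) = - (w r c) * (eta r * eta r)" by (simp add: algebra_simps)
    moreover have "?k r c * (2 * eta r) = (w r c) * (eta r * eta r)" by (simp add: algebra_simps)
    ultimately show "?k c r * (2 * eta r) - ?k r c * (2 * eta r) = - 2 * w r c" by (simp add: eta_sq)
  qed
  then have "abs_cl (Bexp w) * g r - g r * abs_cl (Bexp w) = (\<Sum>c\<in>UNIV. (- 2 * w r c) *\<^sub>R g c)"
    unfolding 1 by (simp add: sum_subtractf[symmetric] scaleR_diff_left[symmetric])
  then show ?thesis unfolding abs_Dgen by (simp add: scaleR_sum_right)
qed

definition dlt :: "clt \<Rightarrow> clt \<Rightarrow> clt" where "dlt B y = (1/2) *\<^sub>R (B * y - y * B)"

lemma dlt_mult: "dlt B (x * y) = dlt B x * y + x * dlt B y"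
  unfolding dlt_def by (simp add: algebra_simps)

lemma prodlist_simps[simp]: "prodlist [] = cone" "prodlist (x # xs) = x \<star> prodlist xs"
  by (simp_all add: prodlist_def)

lemma derivation_list:
  assumes "\<And>l. abs_cl (Dd l) = dlt B (g l)"
  shows "abs_cl (csum (\<lambda>j. prodlist ((map gen L)[j := Dd (L ! j)])) {..<length L})
         = dlt B (abs_cl (prodlist (map gen L)))"
proof (induction L)
  case Nil
  then show ?case by (simp add: abs_csum abs_hom dlt_def)
next
  case (Cons l L)
  have "abs_cl (csum (\<lambda>j. prodlist ((map gen (l # L))[j := Dd ((l # L) ! j)])) {..<length (l # L)})
     = (\<Sum>j<Suc (length L). abs_cl (prodlist ((map gen (l # L))[j := Dd ((l # L) ! j)])))"
    by (simp add: abs_csum)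
  also have "\<dots> = abs_cl (Dd l) * abs_cl (prodlist (map gen L))
      + g l * (\<Sum>j<length L. abs_cl (prodlist ((map gen L)[j := Dd (L ! j)])))"
    unfolding sum.lessThan_Suc_shift by (simp add: abs_hom g_def sum_distrib_left)
  also have "\<dots> = dlt B (g l) * abs_cl (prodlist (map gen L)) + g l * dlt B (abs_cl (prodlist (map gen L)))"
    using Cons by (simp add: assms abs_csum)
  also have "\<dots> = dlt B (abs_cl (prodlist (map gen (l # L))))"
    by (simp add: dlt_mult abs_hom g_def)
  finally show ?case .
qed

definition bas :: "idx set \<Rightarrow> cl" where "bas A = (\<lambda>C. if C = A then 1 else 0)"

lemma gen_mul_bas:
  assumes "\<forall>j\<in>S. l < j"
  shows "gen l \<star> bas S = bas (insert l S)"
proof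
  fix D
  have lS: "l \<notin> S" using assms by auto
  have "(gen l \<star> bas S) D = (\<Sum>A\<in>UNIV. if A = {l} then blade_sign A (sd A D) * bas S (sd A D) else 0)"
    unfolding cmul_alt by (rule sum.cong) (auto simp: gen_def)
  also have "\<dots> = blade_sign {l} (sd {l} D) * bas S (sd {l} D)" by (simp add: sum.delta')
  also have "\<dots> = (if D = insert l S then blade_sign {l} S else 0)"
    using lS by (auto simp: bas_def sd_def)
  also have "blade_sign {l} S = 1"
  proof -
    have e: "{(i, j). i \<in> {l} \<and> j \<in> S \<and> j < i} = {}" using assms by auto
    show ?thesis unfolding blade_sign_def e using lS by simp
  qed
  finally show "(gen l \<star> bas S) D = bas (insert l S) D" by (simp add: bas_def)
qed

lemma prodlist_sorted: "sorted_wrt (<) L \<Longrightarrow> prodlist (map gen L) = bas (set L)"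
proof (induction L)
  case Nil
  then show ?case by (simp add: bas_def cone_def fun_eq_iff)
next
  case (Cons l L)
  then show ?case by (simp add: gen_mul_bas)
qed

lemma prodlist_bas: "prodlist (map gen (sorted_list_of_set A)) = bas A"
  using prodlist_sorted[of "sorted_list_of_set A"] by simp

lemma Dblade_dlt:
  assumes "\<And>l. abs_cl (Dgen w l) = dlt B (g l)"
  shows "abs_cl (Dblade w A) = dlt B (abs_cl (bas A))"
  unfolding Dblade_def Let_def prodlist_bas[symmetric]
  by (rule derivation_list) (rule assms)

lemma cl_expand: "abs_cl y = (\<Sum>A\<in>UNIV. y A *\<^sub>R abs_cl (bas A))"
proof -
  have "y = csum (\<lambda>A. cscale (y A) (bas A)) UNIV"
  proof
    fix C
    have "csum (\<lambda>A. cscale (y A) (bas A)) UNIV C = (\<Sum>A\<in>UNIV. if A = C then y A else 0)"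
      unfolding csum_def cscale_def bas_def by (rule sum.cong) auto
    then show "y C = csum (\<lambda>A. cscale (y A) (bas A)) UNIV C" by (simp add: sum.delta')
  qed
  then have "abs_cl y = abs_cl (csum (\<lambda>A. cscale (y A) (bas A)) UNIV)" by simp
  then show ?thesis by (simp add: abs_csum abs_hom)
qed

lemma dlt_sum: "dlt B (\<Sum>A\<in>S. c A *\<^sub>R x A) = (\<Sum>A\<in>S. c A *\<^sub>R dlt B (x A))"
  unfolding dlt_def
  by (simp add: sum_distrib_left sum_distrib_right scaleR_sum_right sum_subtractf[symmetric]
      algebra_simps)

lemma Dalg_dlt:
  assumes "\<And>l. abs_cl (Dgen w l) = dlt B (g l)"
  shows "abs_cl (Dalg w y) = dlt B (abs_cl y)"
proof -
  have "abs_cl (Dalg w y) = (\<Sum>A\<in>UNIV. y A *\<^sub>R abs_cl (Dblade w A))"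
    by (simp add: Dalg_def abs_csum abs_hom)
  also have "\<dots> = (\<Sum>A\<in>UNIV. y A *\<^sub>R dlt B (abs_cl (bas A)))"
    using Dblade_dlt[OF assms] by simp
  also have "\<dots> = dlt B (abs_cl y)" unfolding cl_expand[of y] dlt_sum ..
  finally show ?thesis .
qed

lemma Dalg_Bexp:
  assumes "compat w"
  shows "Dalg w y = cscale (1/2) (ccomm (Bexp w) y)"
proof -
  have "abs_cl (Dalg w y) = dlt (abs_cl (Bexp w)) (abs_cl y)"
    by (rule Dalg_dlt) (simp add: dlt_def Bexp_comm_gen[OF assms] g_def[symmetric])
  then show ?thesis by (simp add: abs_eq_iff abs_hom dlt_def)
qed

lemma compat_diag: "compat w \<Longrightarrow> w r r = 0"
  unfolding compat_def using eta_nz[of r] by (metis add.inverse_unique add_cancel_right_left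
      mult_eq_0_iff neg_equal_zero)

lemma Bexp_biv:
  assumes "compat w"
  shows "is_bivector (Bexp w)"
  unfolding is_bivector_def
proof (intro allI impI)
  fix A :: "idx set"
  assume cA: "card A \<noteq> 2"
  have *: "\<And>p q. eta p * w p q / 2 * (gen p \<star> gen q) A = 0"
  proof -
    fix p q
    show "eta p * w p q / 2 * (gen p \<star> gen q) A = 0"
    proof (cases "p = q")
      case True
      then show ?thesis using compat_diag[OF assms] by simp
    next
      case False
      then have "sd {p} {q} = {p, q}" by (auto simp: sd_def)
      then have "A \<noteq> sd {p} {q}" using cA False by auto
      then show ?thesis by (simp add: gen_mul)
    qed
  qed
  have "Bexp w A = (\<Sum>p\<in>UNIV. \<Sum>q\<in>UNIV. eta p * w p q / 2 * (gen p \<star> gen q) A)"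
    by (simp add: Bexp_def csum_def cscale_def)
  also have "\<dots> = 0"
    by (intro sum.neutral ballI) (rule *)
  finally show "Bexp w A = 0" .
qed

lemma sd_inv2[simp]: "sd (sd A C) C = A" by (auto simp: sd_def)
lemma sd_eq_single: "sd A C = {r} \<longleftrightarrow> A = sd {r} C" by (auto simp: sd_def)

lemma gen_comm_comp:
  "(D \<star> gen r) C = blade_sign (sd {r} C) {r} * D (sd {r} C)"
  "(gen r \<star> D) C = blade_sign {r} (sd {r} C) * D (sd {r} C)"
proof -
  have "(D \<star> gen r) C = (\<Sum>A\<in>UNIV. if A = sd {r} C then blade_sign A (sd A C) * D A else 0)"
    unfolding cmul_alt by (rule sum.cong) (auto simp: gen_def sd_eq_single)
  then show "(D \<star> gen r) C = blade_sign (sd {r} C) {r} * D (sd {r} C)"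
    by (simp add: sum.delta' sd_assoc[symmetric])
  have "(gen r \<star> D) C = (\<Sum>A\<in>UNIV. if A = {r} then blade_sign A (sd A C) * D (sd A C) else 0)"
    unfolding cmul_alt by (rule sum.cong) (auto simp: gen_def)
  then show "(gen r \<star> D) C = blade_sign {r} (sd {r} C) * D (sd {r} C)"
    by (simp add: sum.delta')
qed

lemma biv_central_zero:
  assumes "is_bivector D" "\<And>r. D \<star> gen r = gen r \<star> D"
  shows "D = (\<lambda>_. 0)"
proof
  fix X :: "idx set"
  show "D X = 0"
  proof (cases "card X = 2")
    case False
    then show ?thesis using assms(1) unfolding is_bivector_def by blast
  next
    case True
    then obtain p r where pr: "p \<noteq> r" "X = {p, r}" by (auto simp: card_2_iff)
    have sX: "sd {r} (sd {r} X) = X" by simp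
    have "(D \<star> gen r) (sd {r} X) = (gen r \<star> D) (sd {r} X)" using assms(2) by simp
    then have e: "blade_sign X {r} * D X = blade_sign {r} X * D X"
      unfolding gen_comm_comp sX .
    have s1: "blade_sign X {r} = (if r < p then -1 else 1) * eta r"
    proof -
      have "{(i, j). i \<in> X \<and> j \<in> {r} \<and> j < i} = (if r < p then {(p, r)} else {})"
        using pr by auto
      moreover have "X \<inter> {r} = {r}" using pr by auto
      ultimately show ?thesis unfolding blade_sign_def by auto
    qed
    have s2: "blade_sign {r} X = (if p < r then -1 else 1) * eta r"
    proof -
      have "{(i, j). i \<in> {r} \<and> j \<in> X \<and> j < i} = (if p < r then {(r, p)} else {})"
        using pr by auto
      moreover have "{r} \<inter> X = {r}" using pr by auto
      ultimately show ?thesis unfolding blade_sign_def by auto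
    qed
    have "blade_sign X {r} \<noteq> blade_sign {r} X"
      unfolding s1 s2 using pr(1) eta_nz[of r]
      by (cases "p < r") (auto simp: not_less_iff_gr_or_eq)
    then show ?thesis using e by simp
  qed
qed

lemma omega_Bexp:
  assumes "compat w"
  shows "(THE B. is_bivector B \<and> (\<forall>y. Dalg w y = cscale (1/2) (ccomm B y))) = Bexp w"
proof (rule the_equality)
  show "is_bivector (Bexp w) \<and> (\<forall>y. Dalg w y = cscale (1/2) (ccomm (Bexp w) y))"
    using Bexp_biv[OF assms] Dalg_Bexp[OF assms] by blast
next
  fix B
  assume B: "is_bivector B \<and> (\<forall>y. Dalg w y = cscale (1/2) (ccomm B y))"
  let ?D = "csub B (Bexp w)"
  have bv: "is_bivector ?D" using B Bexp_biv[OF assms] unfolding is_bivector_def csub_def by simp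
  have "\<And>r. ?D \<star> gen r = gen r \<star> ?D"
  proof -
    fix r
    have "cscale (1/2) (ccomm B (gen r)) = cscale (1/2) (ccomm (Bexp w) (gen r))"
      using B Dalg_Bexp[OF assms] by metis
    then have "abs_cl (cscale (1/2) (ccomm B (gen r))) = abs_cl (cscale (1/2) (ccomm (Bexp w) (gen r)))"
      by simp
    then have "abs_cl B * g r - g r * abs_cl B = abs_cl (Bexp w) * g r - g r * abs_cl (Bexp w)"
      by (simp add: abs_hom g_def)
    then have "(abs_cl B - abs_cl (Bexp w)) * g r = g r * (abs_cl B - abs_cl (Bexp w))"
      by (simp add: algebra_simps)
    then show "?D \<star> gen r = gen r \<star> ?D" by (simp add: abs_eq_iff abs_hom g_def)
  qed
  then have "?D = (\<lambda>_. 0)" using biv_central_zero bv by blast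
  then show "B = Bexp w" by (simp add: csub_def fun_eq_iff)
qed

definition PD :: "idx \<Rightarrow> (pt \<Rightarrow> real) \<Rightarrow> pt \<Rightarrow> real" where
  "PD i f y = frechet_derivative f (at y) (axis i 1)"

lemma sm_diff: "smooth_on U f \<Longrightarrow> x \<in> U \<Longrightarrow> f differentiable (at x)"
  unfolding smooth_on_def using Ck.simps(2)[of 0 U f] by blast

lemma sm_PD: "smooth_on U f \<Longrightarrow> smooth_on U (PD i f)"
  unfolding smooth_on_def PD_def using Ck.simps(2) by blast

lemma sm_cont: "smooth_on U f \<Longrightarrow> continuous_on U f"
  unfolding smooth_on_def using Ck.simps(1) by blast

lemma vec_expand: "(\<Sum>j\<in>UNIV. (h $ j) *\<^sub>R axis j (1::real)) = (h :: pt)"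
  using basis_expansion[of h] by (simp add: scalar_mult_eq_scaleR)

lemma fd_expand:
  assumes "f differentiable (at y)"
  shows "frechet_derivative f (at y) h = (\<Sum>j\<in>UNIV. h $ j * PD j f y)"
proof -
  have lin: "linear (frechet_derivative f (at y))"
    using assms frechet_derivative_works has_derivative_linear by blast
  have "frechet_derivative f (at y) h = frechet_derivative f (at y) (\<Sum>j\<in>UNIV. (h $ j) *\<^sub>R axis j 1)"
    by (simp add: vec_expand)
  also have "\<dots> = (\<Sum>j\<in>UNIV. h $ j * PD j f y)"
    by (simp add: linear_sum[OF lin] linear_cmul[OF lin] PD_def)
  finally show ?thesis .
qed

lemma vec_has_derivative:
  fixes F :: "pt \<Rightarrow> pt"
  assumes "\<And>j. (\<lambda>y. F y $ j) differentiable (at x)"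
  shows "(F has_derivative (\<lambda>h. \<Sum>j\<in>UNIV. frechet_derivative (\<lambda>y. F y $ j) (at x) h *\<^sub>R axis j 1)) (at x)"
proof -
  have d: "((\<lambda>y. \<Sum>j\<in>UNIV. (F y $ j) *\<^sub>R axis j 1) has_derivative
        (\<lambda>h. \<Sum>j\<in>UNIV. frechet_derivative (\<lambda>y. F y $ j) (at x) h *\<^sub>R axis j 1)) (at x)"
    by (intro has_derivative_sum has_derivative_scaleR_left frechet_derivative_works[THEN iffD1] assms)
  show ?thesis
    by (rule has_derivative_transform[OF _ _ d]) (auto simp: vec_expand)
qed

lemma vec_fd_component:
  fixes F :: "pt \<Rightarrow> pt"
  assumes "\<And>j. (\<lambda>y. F y $ j) differentiable (at x)"
  shows "frechet_derivative F (at x) h $ j = frechet_derivative (\<lambda>y. F y $ j) (at x) h"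
proof -
  have "frechet_derivative F (at x) = (\<lambda>h. \<Sum>j\<in>UNIV. frechet_derivative (\<lambda>y. F y $ j) (at x) h *\<^sub>R axis j 1)"
    by (rule frechet_derivative_at[OF vec_has_derivative[OF assms], symmetric])
  then show ?thesis by (simp add: sum_component axis_def if_distrib cong: if_cong)
qed

lemma line_deriv:
  fixes f :: "pt \<Rightarrow> real"
  assumes "f differentiable (at (p + s *\<^sub>R u))"
  shows "((\<lambda>s. f (p + s *\<^sub>R u)) has_real_derivative frechet_derivative f (at (p + s *\<^sub>R u)) u) (at s)"
proof -
  have l: "((\<lambda>s. p + s *\<^sub>R u) has_derivative (\<lambda>h. h *\<^sub>R u)) (at s)"
    by (auto intro!: derivative_eq_intros)
  have "((f \<circ> (\<lambda>s. p + s *\<^sub>R u)) has_derivative (frechet_derivative f (at (p + s *\<^sub>R u)) \<circ> (\<lambda>h. h *\<^sub>R u))) (at s)"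
    by (rule diff_chain_at[OF l]) (use assms frechet_derivative_works in blast)
  moreover have lin: "linear (frechet_derivative f (at (p + s *\<^sub>R u)))"
    using assms frechet_derivative_works has_derivative_linear by blast
  moreover have "(\<lambda>h. h * frechet_derivative f (at (p + s *\<^sub>R u)) u) = (*) (frechet_derivative f (at (p + s *\<^sub>R u)) u)"
    by (rule ext) (simp add: mult.commute)
  ultimately show ?thesis
    unfolding has_field_derivative_def
    by (simp add: o_def linear_cmul[OF lin])
qed

lemma mvt_square:
  fixes f :: "pt \<Rightarrow> real"
  assumes t: "t > 0" and sub: "cball x (2 * t) \<subseteq> U"
    and nu: "norm u = 1" and nv: "norm v = 1"
    and df: "\<And>y. y \<in> U \<Longrightarrow> f differentiable (at y)"
    and dg: "\<And>y. y \<in> U \<Longrightarrow> (\<lambda>z. frechet_derivative f (at z) u) differentiable (at y)"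
  shows "\<exists>z. norm (z - x) < 2 * t \<and>
     f (x + t *\<^sub>R u + t *\<^sub>R v) - f (x + t *\<^sub>R u) - f (x + t *\<^sub>R v) + f x
     = t * t * frechet_derivative (\<lambda>z. frechet_derivative f (at z) u) (at z) v"
proof -
  have inU: "x + a *\<^sub>R u + b *\<^sub>R v \<in> U" if "0 \<le> a" "a \<le> t" "0 \<le> b" "b \<le> t" for a b
  proof -
    have "norm (a *\<^sub>R u + b *\<^sub>R v) \<le> norm (a *\<^sub>R u) + norm (b *\<^sub>R v)" by (rule norm_triangle_ineq)
    also have "\<dots> = a + b" using that nu nv by simp
    moreover have "dist x (x + a *\<^sub>R u + b *\<^sub>R v) = norm (a *\<^sub>R u + b *\<^sub>R v)"
    proof -
      have "x - (x + a *\<^sub>R u + b *\<^sub>R v) = - (a *\<^sub>R u + b *\<^sub>R v)" by (simp add: algebra_simps)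
      then show ?thesis unfolding dist_norm by (metis norm_minus_cancel)
    qed
    ultimately have "dist x (x + a *\<^sub>R u + b *\<^sub>R v) \<le> 2 * t" using that by simp
    then show ?thesis using sub by auto
  qed
  define gf where "gf s = f (x + s *\<^sub>R u + t *\<^sub>R v) - f (x + s *\<^sub>R u)" for s
  define G1 where "G1 s = frechet_derivative f (at (x + t *\<^sub>R v + s *\<^sub>R u)) u - frechet_derivative f (at (x + s *\<^sub>R u)) u" for s
  have der1: "\<And>s. 0 \<le> s \<Longrightarrow> s \<le> t \<Longrightarrow> (gf has_real_derivative G1 s) (at s)"
  proof -
    fix s assume s: "0 \<le> s" "s \<le> t"
    have a: "((\<lambda>s. f ((x + t *\<^sub>R v) + s *\<^sub>R u)) has_real_derivative frechet_derivative f (at (x + t *\<^sub>R v + s *\<^sub>R u)) u) (at s)"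
      apply (rule line_deriv) apply (rule df)
      using inU[of s t] s t by (simp add: algebra_simps)
    have b: "((\<lambda>s. f (x + s *\<^sub>R u)) has_real_derivative frechet_derivative f (at (x + s *\<^sub>R u)) u) (at s)"
      apply (rule line_deriv) apply (rule df)
      using inU[of s 0] s t by simp
    have e: "gf = (\<lambda>s. f ((x + t *\<^sub>R v) + s *\<^sub>R u) - f (x + s *\<^sub>R u))"
      unfolding gf_def by (simp add: algebra_simps)
    show "(gf has_real_derivative G1 s) (at s)"
      unfolding e G1_def by (rule DERIV_diff[OF a b])
  qed
  obtain \<sigma> where sg: "0 < \<sigma>" "\<sigma> < t" and m1: "gf t - gf 0 = (t - 0) * G1 \<sigma>"
    using MVT2[OF t der1] by blast
  define kf where "kf b = frechet_derivative f (at (x + \<sigma> *\<^sub>R u + b *\<^sub>R v)) u" for b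
  define G2 where "G2 b = frechet_derivative (\<lambda>z. frechet_derivative f (at z) u) (at (x + \<sigma> *\<^sub>R u + b *\<^sub>R v)) v" for b
  have der2: "\<And>b. 0 \<le> b \<Longrightarrow> b \<le> t \<Longrightarrow> (kf has_real_derivative G2 b) (at b)"
  proof -
    fix b assume b: "0 \<le> b" "b \<le> t"
    have "(\<lambda>z. frechet_derivative f (at z) u) differentiable (at (x + \<sigma> *\<^sub>R u + b *\<^sub>R v))"
      using dg inU[of \<sigma> b] b sg by simp
    from line_deriv[of "\<lambda>z. frechet_derivative f (at z) u" "x + \<sigma> *\<^sub>R u" b v, OF this]
    show "(kf has_real_derivative G2 b) (at b)"
      unfolding G2_def kf_def[abs_def] by simp
  qed
  obtain \<tau> where tg: "0 < \<tau>" "\<tau> < t" and m2: "kf t - kf 0 = (t - 0) * G2 \<tau>"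
    using MVT2[OF t der2] by blast
  have "kf t = frechet_derivative f (at (x + t *\<^sub>R v + \<sigma> *\<^sub>R u)) u" unfolding kf_def by (simp add: algebra_simps)
  moreover have "kf 0 = frechet_derivative f (at (x + \<sigma> *\<^sub>R u)) u" unfolding kf_def by simp
  ultimately have "G1 \<sigma> = kf t - kf 0" unfolding G1_def by simp
  then have A: "gf t - gf 0 = t * t * G2 \<tau>"
    using m1 m2 by simp
  have B: "gf t - gf 0 = f (x + t *\<^sub>R u + t *\<^sub>R v) - f (x + t *\<^sub>R u) - f (x + t *\<^sub>R v) + f x"
    unfolding gf_def by (simp add: algebra_simps)
  have C: "norm ((x + \<sigma> *\<^sub>R u + \<tau> *\<^sub>R v) - x) < 2 * t"
  proof -
    have "norm ((x + \<sigma> *\<^sub>R u + \<tau> *\<^sub>R v) - x) = norm (\<sigma> *\<^sub>R u + \<tau> *\<^sub>R v)" by (simp add: algebra_simps)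
    also have "\<dots> \<le> norm (\<sigma> *\<^sub>R u) + norm (\<tau> *\<^sub>R v)" by (rule norm_triangle_ineq)
    also have "\<dots> = \<sigma> + \<tau>" using sg tg nu nv by simp
    finally show ?thesis using sg tg by simp
  qed
  have D: "f (x + t *\<^sub>R u + t *\<^sub>R v) - f (x + t *\<^sub>R u) - f (x + t *\<^sub>R v) + f x = t * t * G2 \<tau>"
    using A B by linarith
  have E: "G2 \<tau> = frechet_derivative (\<lambda>z. frechet_derivative f (at z) u) (at (x + \<sigma> *\<^sub>R u + \<tau> *\<^sub>R v)) v"
    unfolding G2_def ..
  show ?thesis
    apply (rule exI[of _ "x + \<sigma> *\<^sub>R u + \<tau> *\<^sub>R v"])
    using C D unfolding E by blast
qed

lemma PD_fun: "PD i f = (\<lambda>z. frechet_derivative f (at z) (axis i 1))"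
  by (rule ext) (simp add: PD_def)

lemma schwarz:
  fixes f :: "pt \<Rightarrow> real"
  assumes U: "open U" "x \<in> U"
    and df: "\<And>y. y \<in> U \<Longrightarrow> f differentiable (at y)"
    and dPi: "\<And>y. y \<in> U \<Longrightarrow> PD i f differentiable (at y)"
    and dPj: "\<And>y. y \<in> U \<Longrightarrow> PD j f differentiable (at y)"
    and ci: "continuous_on U (PD j (PD i f))"
    and cj: "continuous_on U (PD i (PD j f))"
  shows "PD j (PD i f) x = PD i (PD j f) x"
proof (rule ccontr)
  let ?A = "PD j (PD i f) x" and ?B = "PD i (PD j f) x"
  assume ne: "?A \<noteq> ?B"
  define \<epsilon> where "\<epsilon> = \<bar>?A - ?B\<bar> / 2"
  have ep: "\<epsilon> > 0" using ne by (simp add: \<epsilon>_def)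
  have "isCont (PD j (PD i f)) x" using ci U continuous_on_eq_continuous_at by blast
  then obtain d1 where d1: "d1 > 0" "\<And>y. dist y x < d1 \<Longrightarrow> dist (PD j (PD i f) y) ?A < \<epsilon>"
    using ep unfolding continuous_at_eps_delta by blast
  have "isCont (PD i (PD j f)) x" using cj U continuous_on_eq_continuous_at by blast
  then obtain d2 where d2: "d2 > 0" "\<And>y. dist y x < d2 \<Longrightarrow> dist (PD i (PD j f) y) ?B < \<epsilon>"
    using ep unfolding continuous_at_eps_delta by blast
  obtain r where r: "r > 0" "ball x r \<subseteq> U" using U open_contains_ball by blast
  define t where "t = min r (min d1 d2) / 3"
  have t: "t > 0" using r d1 d2 by (simp add: t_def)
  have sub: "cball x (2 * t) \<subseteq> U"
  proof -
    have "cball x (2 * t) \<subseteq> ball x r" using t r d1 d2 unfolding t_def by (auto simp: subset_eq)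
    then show ?thesis using r by blast
  qed
  have dgi: "\<And>y. y \<in> U \<Longrightarrow> (\<lambda>z. frechet_derivative f (at z) (axis i 1)) differentiable (at y)"
    using dPi by (simp add: PD_fun)
  have dgj: "\<And>y. y \<in> U \<Longrightarrow> (\<lambda>z. frechet_derivative f (at z) (axis j 1)) differentiable (at y)"
    using dPj by (simp add: PD_fun)
  obtain z1 where z1: "norm (z1 - x) < 2 * t"
    "f (x + t *\<^sub>R axis i 1 + t *\<^sub>R axis j 1) - f (x + t *\<^sub>R axis i 1) - f (x + t *\<^sub>R axis j 1) + f x
     = t * t * frechet_derivative (\<lambda>z. frechet_derivative f (at z) (axis i 1)) (at z1) (axis j 1)"
    using mvt_square[OF t sub norm_axis_1 norm_axis_1 df dgi] by blast
  obtain z2 where z2: "norm (z2 - x) < 2 * t"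
    "f (x + t *\<^sub>R axis j 1 + t *\<^sub>R axis i 1) - f (x + t *\<^sub>R axis j 1) - f (x + t *\<^sub>R axis i 1) + f x
     = t * t * frechet_derivative (\<lambda>z. frechet_derivative f (at z) (axis j 1)) (at z2) (axis i 1)"
    using mvt_square[OF t sub norm_axis_1 norm_axis_1 df dgj] by blast
  have comm: "x + t *\<^sub>R axis j 1 + t *\<^sub>R axis i 1 = x + t *\<^sub>R axis i 1 + t *\<^sub>R axis j 1"
    by (simp add: algebra_simps)
  have e1: "PD j (PD i f) z1 = frechet_derivative (\<lambda>z. frechet_derivative f (at z) (axis i 1)) (at z1) (axis j 1)"
    by (simp add: PD_fun)
  have e2: "PD i (PD j f) z2 = frechet_derivative (\<lambda>z. frechet_derivative f (at z) (axis j 1)) (at z2) (axis i 1)"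
    by (simp add: PD_fun)
  have "t * t * PD j (PD i f) z1 = t * t * PD i (PD j f) z2"
    using z1(2) z2(2) unfolding comm e1 e2 by linarith
  then have eq: "PD j (PD i f) z1 = PD i (PD j f) z2" using t by simp
  have "dist z1 x < d1" using z1(1) t unfolding t_def dist_norm by linarith
  then have a1: "\<bar>PD j (PD i f) z1 - ?A\<bar> < \<epsilon>" using d1 by (simp add: dist_real_def)
  have "dist z2 x < d2" using z2(1) t unfolding t_def dist_norm by linarith
  then have a2: "\<bar>PD i (PD j f) z2 - ?B\<bar> < \<epsilon>" using d2 by (simp add: dist_real_def)
  have "\<bar>?A - ?B\<bar> < 2 * \<epsilon>" using a1 a2 eq by linarith
  then show False unfolding \<epsilon>_def by simp
qed

lemma comm_scalar:
  fixes e :: "idx \<Rightarrow> pt \<Rightarrow> pt" and f :: "pt \<Rightarrow> real"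
  assumes U: "open U" "x \<in> U"
    and es: "\<And>a j. smooth_on U (\<lambda>y. e a y $ j)"
    and br: "frechet_derivative (e b) (at x) (e a x) - frechet_derivative (e a) (at x) (e b x)
              = (\<Sum>c\<in>UNIV. cc c *\<^sub>R e c x)"
    and fs: "smooth_on U f"
  shows "frechet_derivative (\<lambda>y. frechet_derivative f (at y) (e b y)) (at x) (e a x)
       - frechet_derivative (\<lambda>y. frechet_derivative f (at y) (e a y)) (at x) (e b x)
       = (\<Sum>c\<in>UNIV. cc c * frechet_derivative f (at x) (e c x))"
proof -
  have fdiff: "\<And>y. y \<in> U \<Longrightarrow> f differentiable (at y)" using sm_diff[OF fs] by blast
  have pdiff: "\<And>j y. y \<in> U \<Longrightarrow> PD j f differentiable (at y)" using sm_diff[OF sm_PD[OF fs]] by blast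
  have ediff: "\<And>a j y. y \<in> U \<Longrightarrow> (\<lambda>y. e a y $ j) differentiable (at y)" using sm_diff[OF es] by blast
  define D where "D a = (\<lambda>h. \<Sum>j\<in>UNIV. e a x $ j * frechet_derivative (PD j f) (at x) h
            + frechet_derivative (\<lambda>y. e a y $ j) (at x) h * PD j f x)" for a
  have hd: "((\<lambda>y. frechet_derivative f (at y) (e a y)) has_derivative D a) (at x)" for a
  proof -
    have "((\<lambda>y. \<Sum>j\<in>UNIV. e a y $ j * PD j f y) has_derivative D a) (at x)"
      unfolding D_def
      by (intro has_derivative_sum has_derivative_mult frechet_derivative_works[THEN iffD1]
          ediff pdiff U(2))
    then show ?thesis
      by (rule has_derivative_transform_within_open[OF _ U]) (simp add: fd_expand[OF fdiff])
  qed
  have val: "frechet_derivative (\<lambda>y. frechet_derivative f (at y) (e a y)) (at x) h = D a h" for a h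
    using frechet_derivative_at[OF hd[of a]] by simp
  define PP where "PP i j = PD i (PD j f) x" for i j
  have PPsym: "PP i j = PP j i" for i j
    unfolding PP_def
  proof (rule schwarz[OF U fdiff])
    show "\<And>y. y \<in> U \<Longrightarrow> PD j f differentiable at y" by (rule pdiff)
    show "\<And>y. y \<in> U \<Longrightarrow> PD i f differentiable at y" by (rule pdiff)
    show "continuous_on U (PD i (PD j f))" by (rule sm_cont[OF sm_PD[OF sm_PD[OF fs]]])
    show "continuous_on U (PD j (PD i f))" by (rule sm_cont[OF sm_PD[OF sm_PD[OF fs]]])
  qed
  have fdP: "frechet_derivative (PD j f) (at x) h = (\<Sum>i\<in>UNIV. h $ i * PP i j)" for j h
    unfolding PP_def by (rule fd_expand[OF pdiff[OF U(2)]])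
  define De where "De a b j = frechet_derivative (\<lambda>y. e a y $ j) (at x) (e b x)" for a b j
  have Dv: "D a (e b x) = (\<Sum>j\<in>UNIV. \<Sum>i\<in>UNIV. e a x $ j * e b x $ i * PP i j) + (\<Sum>j\<in>UNIV. De a b j * PD j f x)" for a b
    unfolding D_def De_def fdP by (simp add: sum.distrib sum_distrib_left mult.assoc)
  have part1: "(\<Sum>j\<in>UNIV. \<Sum>i\<in>UNIV. e b x $ j * e a x $ i * PP i j)
             = (\<Sum>j\<in>UNIV. \<Sum>i\<in>UNIV. e a x $ j * e b x $ i * PP i j)"
  proof -
    have "(\<Sum>j\<in>UNIV. \<Sum>i\<in>UNIV. e a x $ j * e b x $ i * PP i j)
        = (\<Sum>i\<in>UNIV. \<Sum>j\<in>UNIV. e a x $ j * e b x $ i * PP i j)" by (rule sum.swap)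
    also have "\<dots> = (\<Sum>i\<in>UNIV. \<Sum>j\<in>UNIV. e b x $ i * e a x $ j * PP j i)"
      by (simp add: PPsym mult.commute)
    finally show ?thesis by simp
  qed
  have bj: "De b a j - De a b j = (\<Sum>c\<in>UNIV. cc c * e c x $ j)" for j
  proof -
    have "(frechet_derivative (e b) (at x) (e a x) - frechet_derivative (e a) (at x) (e b x)) $ j
          = (\<Sum>c\<in>UNIV. cc c *\<^sub>R e c x) $ j" using br by simp
    moreover have "frechet_derivative (e b) (at x) (e a x) $ j = De b a j"
      unfolding De_def by (rule vec_fd_component) (rule ediff[OF U(2)])
    moreover have "frechet_derivative (e a) (at x) (e b x) $ j = De a b j"
      unfolding De_def by (rule vec_fd_component) (rule ediff[OF U(2)])
    ultimately show ?thesis by (simp add: sum_component)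
  qed
  have part2: "(\<Sum>j\<in>UNIV. De b a j * PD j f x) - (\<Sum>j\<in>UNIV. De a b j * PD j f x)
        = (\<Sum>c\<in>UNIV. cc c * frechet_derivative f (at x) (e c x))"
  proof -
    have "(\<Sum>j\<in>UNIV. De b a j * PD j f x) - (\<Sum>j\<in>UNIV. De a b j * PD j f x)
        = (\<Sum>j\<in>UNIV. (De b a j - De a b j) * PD j f x)"
      by (simp add: sum_subtractf left_diff_distrib)
    also have "\<dots> = (\<Sum>j\<in>UNIV. \<Sum>c\<in>UNIV. cc c * (e c x $ j * PD j f x))"
      unfolding bj by (simp add: sum_distrib_right mult.assoc)
    also have "\<dots> = (\<Sum>c\<in>UNIV. cc c * (\<Sum>j\<in>UNIV. e c x $ j * PD j f x))"
      by (subst sum.swap) (simp add: sum_distrib_left)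
    also have "\<dots> = (\<Sum>c\<in>UNIV. cc c * frechet_derivative f (at x) (e c x))"
      by (simp add: fd_expand[OF fdiff[OF U(2)]])
    finally show ?thesis .
  qed
  show ?thesis unfolding val Dv using part1 part2 by simp
qed

lemma dd_diff:
  fixes e :: "idx \<Rightarrow> pt \<Rightarrow> pt" and f :: "pt \<Rightarrow> real"
  assumes U: "open U" "x \<in> U"
    and es: "\<And>a j. smooth_on U (\<lambda>y. e a y $ j)"
    and fs: "smooth_on U f"
  shows "(\<lambda>y. frechet_derivative f (at y) (e a y)) differentiable (at x)"
proof -
  have fdiff: "\<And>y. y \<in> U \<Longrightarrow> f differentiable (at y)" using sm_diff[OF fs] by blast
  have pdiff: "\<And>j y. y \<in> U \<Longrightarrow> PD j f differentiable (at y)" using sm_diff[OF sm_PD[OF fs]] by blast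
  have ediff: "\<And>a j y. y \<in> U \<Longrightarrow> (\<lambda>y. e a y $ j) differentiable (at y)" using sm_diff[OF es] by blast
  have "((\<lambda>y. \<Sum>j\<in>UNIV. e a y $ j * PD j f y) has_derivative (\<lambda>h. \<Sum>j\<in>UNIV. e a x $ j * frechet_derivative (PD j f) (at x) h
            + frechet_derivative (\<lambda>y. e a y $ j) (at x) h * PD j f x)) (at x)"
    by (intro has_derivative_sum has_derivative_mult frechet_derivative_works[THEN iffD1]
          ediff pdiff U(2))
  then have "((\<lambda>y. frechet_derivative f (at y) (e a y)) has_derivative (\<lambda>h. \<Sum>j\<in>UNIV. e a x $ j * frechet_derivative (PD j f) (at x) h
            + frechet_derivative (\<lambda>y. e a y $ j) (at x) h * PD j f x)) (at x)"
    by (rule has_derivative_transform_within_open[OF _ U]) (simp add: fd_expand[OF fdiff])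
  then show ?thesis unfolding differentiable_def by blast
qed

definition cfd :: "(pt \<Rightarrow> cl) \<Rightarrow> pt \<Rightarrow> pt \<Rightarrow> cl" where
  "cfd F x h = (\<lambda>I. frechet_derivative (\<lambda>y. F y I) (at x) h)"

definition chd :: "(pt \<Rightarrow> cl) \<Rightarrow> (pt \<Rightarrow> cl) \<Rightarrow> pt \<Rightarrow> bool" where
  "chd F F' x \<longleftrightarrow> (\<forall>I. ((\<lambda>y. F y I) has_derivative (\<lambda>h. F' h I)) (at x))"

lemma chd_cfd: "chd F F' x \<Longrightarrow> cfd F x h = F' h"
proof (rule ext)
  fix I assume "chd F F' x"
  then have "((\<lambda>y. F y I) has_derivative (\<lambda>h. F' h I)) (at x)" unfolding chd_def by blast
  from frechet_derivative_at[OF this] show "cfd F x h I = F' h I" unfolding cfd_def by metis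
qed

lemma chd_diffI: "(\<And>I. (\<lambda>y. F y I) differentiable (at x)) \<Longrightarrow> chd F (cfd F x) x"
  unfolding chd_def cfd_def using frechet_derivative_works by blast

lemma chd_add: "chd F F' x \<Longrightarrow> chd G G' x \<Longrightarrow> chd (\<lambda>y. cadd (F y) (G y)) (\<lambda>h. cadd (F' h) (G' h)) x"
  unfolding chd_def cadd_def by (auto intro: has_derivative_add)

lemma chd_scale: "chd F F' x \<Longrightarrow> chd (\<lambda>y. cscale r (F y)) (\<lambda>h. cscale r (F' h)) x"
  unfolding chd_def cscale_def by (auto intro: has_derivative_mult_right)

lemma chd_local: "chd F F' x \<Longrightarrow> open U \<Longrightarrow> x \<in> U \<Longrightarrow> (\<And>y. y \<in> U \<Longrightarrow> F y = G y) \<Longrightarrow> chd G F' x"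
  unfolding chd_def by (auto intro: has_derivative_transform_within_open)

lemma chd_mul:
  assumes F: "chd F F' x" and G: "chd G G' x"
  shows "chd (\<lambda>y. F y \<star> G y) (\<lambda>h. cadd (F' h \<star> G x) (F x \<star> G' h)) x"
  unfolding chd_def
proof
  fix I
  have "\<And>A. ((\<lambda>y. blade_sign A (sd A I) * F y A * G y (sd A I)) has_derivative
        (\<lambda>h. blade_sign A (sd A I) * F' h A * G x (sd A I) + blade_sign A (sd A I) * F x A * G' h (sd A I))) (at x)"
  proof -
    fix A
    have f: "((\<lambda>y. F y A) has_derivative (\<lambda>h. F' h A)) (at x)" using F unfolding chd_def by blast
    have g: "((\<lambda>y. G y (sd A I)) has_derivative (\<lambda>h. G' h (sd A I))) (at x)" using G unfolding chd_def by blast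
    have "((\<lambda>y. blade_sign A (sd A I) * (F y A * G y (sd A I))) has_derivative
        (\<lambda>h. blade_sign A (sd A I) * (F x A * G' h (sd A I) + F' h A * G x (sd A I)))) (at x)"
      by (rule has_derivative_mult_right[OF has_derivative_mult[OF f g]])
    then show "?thesis A" by (simp add: algebra_simps)
  qed
  then have "((\<lambda>y. \<Sum>A\<in>UNIV. blade_sign A (sd A I) * F y A * G y (sd A I)) has_derivative
        (\<lambda>h. \<Sum>A\<in>UNIV. blade_sign A (sd A I) * F' h A * G x (sd A I) + blade_sign A (sd A I) * F x A * G' h (sd A I))) (at x)"
    by (rule has_derivative_sum)
  then show "((\<lambda>y. (F y \<star> G y) I) has_derivative (\<lambda>h. cadd (F' h \<star> G x) (F x \<star> G' h) I)) (at x)"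
    unfolding cmul_alt cadd_def by (simp add: sum.distrib)
qed

lemma Bexp_alt: "Bexp w I = (\<Sum>p\<in>UNIV. \<Sum>q\<in>UNIV. (eta p / 2 * (gen p \<star> gen q) I) * w p q)"
  unfolding Bexp_def csum_def cscale_def by (simp add: algebra_simps)

lemma chd_Bexp:
  assumes "\<And>p q. (W p q) differentiable (at x)"
  shows "chd (\<lambda>y. Bexp (\<lambda>p q. W p q y)) (\<lambda>h. Bexp (\<lambda>p q. frechet_derivative (W p q) (at x) h)) x"
  unfolding chd_def Bexp_alt
  by (intro allI has_derivative_sum ballI has_derivative_mult_right
      frechet_derivative_works[THEN iffD1] assms)

definition Om :: "(idx \<Rightarrow> idx \<Rightarrow> idx \<Rightarrow> pt \<Rightarrow> real) \<Rightarrow> idx \<Rightarrow> pt \<Rightarrow> cl" where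
  "Om om a y = Bexp (\<lambda>p q. om p a q y)"

definition Omd :: "(idx \<Rightarrow> idx \<Rightarrow> idx \<Rightarrow> pt \<Rightarrow> real) \<Rightarrow> idx \<Rightarrow> pt \<Rightarrow> pt \<Rightarrow> cl" where
  "Omd om a x h = Bexp (\<lambda>p q. frechet_derivative (om p a q) (at x) h)"

lemma if10: "(if c then 1 else 0) * (X::real) = (if c then X else 0)" by simp

lemma conn_fv: "conn_v om (fv a) y = (\<lambda>p q. om p a q y)"
  unfolding conn_v_def fv_def by (simp add: if10 sum.delta' fun_eq_iff cong: if_cong)

lemma cpartial_fv: "cpartial e (fv a) F y = cfd F y (e a y)"
  unfolding cpartial_def vder_def cfd_def fv_def by (simp add: if10 sum.delta' cong: if_cong)

context
  fixes U :: "pt set"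
    and e :: "idx \<Rightarrow> pt \<Rightarrow> pt"
    and om :: "idx \<Rightarrow> idx \<Rightarrow> idx \<Rightarrow> pt \<Rightarrow> real"
    and cc :: "idx \<Rightarrow> idx \<Rightarrow> idx \<Rightarrow> pt \<Rightarrow> real"
    and psi :: "pt \<Rightarrow> cl"
  assumes U_open: "open U"
    and frame_smooth: "\<And>a j. smooth_on U (\<lambda>x. e a x $ j)"
    and om_smooth: "\<And>b a c. smooth_on U (om b a c)"
    and metric_compat: "\<And>x a b c. x \<in> U \<Longrightarrow> eta b * om b a c x = - (eta c * om c a b x)"
    and bracket: "\<And>x a b. x \<in> U \<Longrightarrow>
        frechet_derivative (e b) (at x) (e a x) - frechet_derivative (e a) (at x) (e b x)
          = (\<Sum>c\<in>UNIV. cc c a b x *\<^sub>R e c x)"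
    and psi_smooth: "\<And>I. smooth_on U (\<lambda>x. psi x I)"
begin

lemma compat_at: "y \<in> U \<Longrightarrow> compat (conn_v om v y)"
  unfolding compat_def
proof (intro allI)
  fix b c assume y: "y \<in> U"
  have "eta b * conn_v om v y b c = (\<Sum>a\<in>UNIV. v a y * (eta b * om b a c y))"
    unfolding conn_v_def by (simp add: sum_distrib_left algebra_simps)
  also have "\<dots> = (\<Sum>a\<in>UNIV. v a y * (- (eta c * om c a b y)))"
    by (rule sum.cong[OF refl]) (metis metric_compat[OF y])
  also have "\<dots> = - (eta c * conn_v om v y c b)"
    unfolding conn_v_def by (simp add: sum_distrib_left sum_negf algebra_simps)
  finally show "eta b * conn_v om v y b c = - (eta c * conn_v om v y c b)" .
qed

lemma omega_at: "y \<in> U \<Longrightarrow> omega_v om v y = Bexp (conn_v om v y)"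
  unfolding omega_v_def by (rule omega_Bexp[OF compat_at])

lemma omega_fv: "y \<in> U \<Longrightarrow> omega_v om (fv a) y = Om om a y"
  by (simp add: omega_at conn_fv Om_def)

lemma Dalg_fv: "y \<in> U \<Longrightarrow> Dalg (conn_v om (fv a) y) z = cscale (1/2) (ccomm (Om om a y) z)"
  using Dalg_Bexp[OF compat_at, of y "fv a" z] by (simp add: conn_fv Om_def)

lemma snabla_eq: "y \<in> U \<Longrightarrow> snabla e om (fv a) F y = cadd (cfd F y (e a y)) (cscale (1/2) (Om om a y \<star> F y))"
  unfolding snabla_def cnabla_def cpartial_fv
  by (simp add: omega_fv Dalg_fv abs_eq_iff abs_hom algebra_simps)

lemma cnabla_eq: "y \<in> U \<Longrightarrow> cnabla e om (fv a) F y = cadd (cfd F y (e a y)) (cscale (1/2) (ccomm (Om om a y) (F y)))"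
  unfolding cnabla_def cpartial_fv by (simp add: Dalg_fv)

lemma chd_Om: "x \<in> U \<Longrightarrow> chd (Om om b) (Omd om b x) x"
  unfolding Om_def[abs_def] Omd_def[abs_def]
  by (rule chd_Bexp[of "\<lambda>p q. om p b q", simplified]) (rule sm_diff[OF om_smooth])

lemma chd_omega: "x \<in> U \<Longrightarrow> chd (omega_v om (fv b)) (Omd om b x) x"
  by (rule chd_local[OF chd_Om U_open]) (simp_all add: omega_fv)

lemma chd_psi: "x \<in> U \<Longrightarrow> chd psi (cfd psi x) x"
  by (rule chd_diffI) (rule sm_diff[OF psi_smooth])

lemma chd_dpsi: "x \<in> U \<Longrightarrow> chd (\<lambda>y. cfd psi y (e b y)) (cfd (\<lambda>y. cfd psi y (e b y)) x) x"
  unfolding cfd_def[of psi]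
  by (rule chd_diffI) (rule dd_diff[OF U_open _ frame_smooth psi_smooth])

lemma chd_snabla: "x \<in> U \<Longrightarrow> chd (snabla e om (fv b) psi)
   (\<lambda>h. cadd (cfd (\<lambda>y. cfd psi y (e b y)) x h) (cscale (1/2) (cadd (Omd om b x h \<star> psi x) (Om om b x \<star> cfd psi x h)))) x"
  by (rule chd_local[OF chd_add[OF chd_dpsi chd_scale[OF chd_mul[OF chd_Om chd_psi]]] U_open])
     (simp_all add: snabla_eq)

lemma comm2: "x \<in> U \<Longrightarrow>
  csub (cfd (\<lambda>y. cfd psi y (e b y)) x (e a x)) (cfd (\<lambda>y. cfd psi y (e a y)) x (e b x))
  = csum (\<lambda>c. cscale (cc c a b x) (cfd psi x (e c x))) UNIV"
  unfolding csub_def csum_def cscale_def cfd_def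
  by (rule ext, rule comm_scalar[OF U_open _ frame_smooth bracket psi_smooth])

lemma omega_cc: "x \<in> U \<Longrightarrow> abs_cl (omega_v om (\<lambda>c y. cc c a b y) x) = (\<Sum>c\<in>UNIV. cc c a b x *\<^sub>R abs_cl (Om om c x))"
proof -
  assume x: "x \<in> U"
  have "abs_cl (omega_v om (\<lambda>c y. cc c a b y) x)
      = (\<Sum>p\<in>UNIV. \<Sum>q\<in>UNIV. (eta p * (\<Sum>c\<in>UNIV. cc c a b x * om p c q x) / 2) *\<^sub>R (g p * g q))"
    by (simp add: omega_at[OF x] abs_Bexp conn_v_def)
  also have "\<dots> = (\<Sum>p\<in>UNIV. \<Sum>q\<in>UNIV. \<Sum>c\<in>UNIV. (cc c a b x * (eta p * om p c q x / 2)) *\<^sub>R (g p * g q))"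
    by (simp add: sum_distrib_left sum_divide_distrib scaleR_sum_left algebra_simps)
  also have "\<dots> = (\<Sum>p\<in>UNIV. \<Sum>c\<in>UNIV. \<Sum>q\<in>UNIV. (cc c a b x * (eta p * om p c q x / 2)) *\<^sub>R (g p * g q))"
    by (rule sum.cong[OF refl], rule sum.swap)
  also have "\<dots> = (\<Sum>c\<in>UNIV. \<Sum>p\<in>UNIV. \<Sum>q\<in>UNIV. (cc c a b x * (eta p * om p c q x / 2)) *\<^sub>R (g p * g q))"
    by (rule sum.swap)
  also have "\<dots> = (\<Sum>c\<in>UNIV. cc c a b x *\<^sub>R abs_cl (Om om c x))"
    by (simp add: Om_def abs_Bexp scaleR_sum_right)
  finally show ?thesis .
qed

end

lemma final_alg:
  fixes DDab DDba dOab dOba Oa Ob P dPa dPb :: clt and Oc dPc :: "idx \<Rightarrow> clt" and k :: "idx \<Rightarrow> real"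
  assumes c: "DDab - DDba = (\<Sum>c\<in>UNIV. k c *\<^sub>R dPc c)"
  shows "(DDab + (1/2) *\<^sub>R (dOab * P + Ob * dPa) + (1/2) *\<^sub>R (Oa * (dPb + (1/2) *\<^sub>R (Ob * P))))
       - (DDba + (1/2) *\<^sub>R (dOba * P + Oa * dPb) + (1/2) *\<^sub>R (Ob * (dPa + (1/2) *\<^sub>R (Oa * P))))
     = (1/2) *\<^sub>R ((((dOab + (1/2) *\<^sub>R (Oa * Ob - Ob * Oa)) - (dOba + (1/2) *\<^sub>R (Ob * Oa - Oa * Ob)))
            - (1/2) *\<^sub>R (Oa * Ob - Ob * Oa) - (\<Sum>c\<in>UNIV. k c *\<^sub>R Oc c)) * P)
       - (\<Sum>c\<in>UNIV. (- k c) *\<^sub>R (dPc c + (1/2) *\<^sub>R (Oc c * P)))"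
proof -
  have s: "(\<Sum>c\<in>UNIV. (- k c) *\<^sub>R (dPc c + (1/2) *\<^sub>R (Oc c * P)))
      = - (\<Sum>c\<in>UNIV. k c *\<^sub>R dPc c) - (1/2) *\<^sub>R ((\<Sum>c\<in>UNIV. k c *\<^sub>R Oc c) * P)"
  proof -
    have "\<And>c. (- k c) *\<^sub>R (dPc c + (1/2) *\<^sub>R (Oc c * P)) = - (k c *\<^sub>R dPc c) - (1/2) *\<^sub>R ((k c *\<^sub>R Oc c) * P)"
      by (simp add: algebra_simps)
    then show ?thesis
      by (simp add: sum_subtractf sum_negf scaleR_sum_right sum_distrib_right)
  qed
  have d: "DDab = DDba + (\<Sum>c\<in>UNIV. k c *\<^sub>R dPc c)" using c by (simp add: algebra_simps)
  show ?thesis unfolding s d by (simp add: algebra_simps)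
qed

lemma abs_csum_U: "abs_cl (csum f (UNIV :: 'a :: finite set)) = (\<Sum>i\<in>UNIV. abs_cl (f i))"
  by (rule abs_csum) simp

theorem mainTheorem7:
  fixes U :: "pt set"
    and e :: "idx \<Rightarrow> pt \<Rightarrow> pt"
    and om :: "idx \<Rightarrow> idx \<Rightarrow> idx \<Rightarrow> pt \<Rightarrow> real"
    and cc :: "idx \<Rightarrow> idx \<Rightarrow> idx \<Rightarrow> pt \<Rightarrow> real"
    and psi :: "pt \<Rightarrow> cl"
  assumes U_open: "open U"
    and frame_smooth: "\<And>a j. smooth_on U (\<lambda>x. e a x $ j)"
    and frame_indep: "\<And>x. x \<in> U \<Longrightarrow> inj (\<lambda>a. e a x) \<and> independent (range (\<lambda>a. e a x))"
    and om_smooth: "\<And>b a c. smooth_on U (om b a c)"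
    and metric_compat: "\<And>x a b c. x \<in> U \<Longrightarrow> eta b * om b a c x = - (eta c * om c a b x)"
    and bracket: "\<And>x a b. x \<in> U \<Longrightarrow>
        frechet_derivative (e b) (at x) (e a x) - frechet_derivative (e a) (at x) (e b x)
          = (\<Sum>c\<in>UNIV. cc c a b x *\<^sub>R e c x)"
    and psi_smooth: "\<And>I. smooth_on U (\<lambda>x. psi x I)"
    and psi_even: "\<And>x. x \<in> U \<Longrightarrow> is_even (psi x)"
  shows "\<forall>x\<in>U. \<forall>a b.
     csub (snabla e om (fv a) (snabla e om (fv b) psi) x)
          (snabla e om (fv b) (snabla e om (fv a) psi) x)
   = csub (cscale (1/2) (curv e om cc a b x \<star> psi x))
          (csum (\<lambda>c. cscale (torsion om cc c a b x - om c a b x + om c b a x)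
                             (snabla e om (fv c) psi x)) UNIV)"
proof (intro ballI allI)
  fix x a b assume x: "x \<in> U"
  note A = U_open frame_smooth om_smooth metric_compat bracket psi_smooth
  have sn: "\<And>a F. snabla e om (fv a) F x = cadd (cfd F x (e a x)) (cscale (1/2) (Om om a x \<star> F x))"
    by (rule snabla_eq[OF A x])
  have cn: "\<And>a F. cnabla e om (fv a) F x = cadd (cfd F x (e a x)) (cscale (1/2) (ccomm (Om om a x) (F x)))"
    by (rule cnabla_eq[OF A x])
  have dsn: "\<And>a b. cfd (snabla e om (fv b) psi) x (e a x) = cadd (cfd (\<lambda>y. cfd psi y (e b y)) x (e a x))
      (cscale (1/2) (cadd (Omd om b x (e a x) \<star> psi x) (Om om b x \<star> cfd psi x (e a x))))"
    by (rule chd_cfd[OF chd_snabla[OF A x]])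
  have dom: "\<And>a b. cfd (omega_v om (fv b)) x (e a x) = Omd om b x (e a x)"
    by (rule chd_cfd[OF chd_omega[OF A x]])
  have ofv: "\<And>a. omega_v om (fv a) x = Om om a x" by (rule omega_fv[OF A x])
  have cm: "csub (cfd (\<lambda>y. cfd psi y (e b y)) x (e a x)) (cfd (\<lambda>y. cfd psi y (e a y)) x (e b x))
      = csum (\<lambda>c. cscale (cc c a b x) (cfd psi x (e c x))) UNIV"
    by (rule comm2[OF A x])
  have occ: "abs_cl (omega_v om (\<lambda>c y. cc c a b y) x) = (\<Sum>c\<in>UNIV. cc c a b x *\<^sub>R abs_cl (Om om c x))"
    by (rule omega_cc[OF A x])
  have tor: "\<And>c. torsion om cc c a b x - om c a b x + om c b a x = - cc c a b x"
    by (simp add: torsion_def)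
  have cmA: "abs_cl (cfd (\<lambda>y. cfd psi y (e b y)) x (e a x)) - abs_cl (cfd (\<lambda>y. cfd psi y (e a y)) x (e b x))
      = (\<Sum>c\<in>UNIV. cc c a b x *\<^sub>R abs_cl (cfd psi x (e c x)))"
    using arg_cong[OF cm, of abs_cl] by (simp add: abs_hom abs_csum)
  show "csub (snabla e om (fv a) (snabla e om (fv b) psi) x)
          (snabla e om (fv b) (snabla e om (fv a) psi) x)
   = csub (cscale (1/2) (curv e om cc a b x \<star> psi x))
          (csum (\<lambda>c. cscale (torsion om cc c a b x - om c a b x + om c b a x)
                             (snabla e om (fv c) psi x)) UNIV)"
    unfolding abs_eq_iff curv_def tor sn cn dsn dom ofv
    apply (simp only: abs_hom abs_csum_U occ)
    apply (rule final_alg[where k = "\<lambda>c. cc c a b x" and Oc = "\<lambda>c. abs_cl (Om om c x)"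
        and dPc = "\<lambda>c. abs_cl (cfd psi x (e c x))", OF cmA])
    done
qed

end
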